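(* Let $g=(c,\mathbb{U}^1,\mathbb{U}^2)$ be a zero-sum game satisfying Assumptions A2 and A4, and let the channels $Q^1,Q^2$ satisfy Assumption A6. For a prior $\zeta\in\mathcal{P}(\mathbb{X})$ let $\mu_\zeta(dx,dy^1,dy^2)=\zeta(dx)Q^1(dy^1|x)Q^2(dy^2|x)$. Let $\zeta_m\to\zeta$ weakly in $\mathcal{P}(\mathbb{X})$, and suppose saddle-point equilibria exist under $\mu_\zeta$ and under each $\mu_{\zeta_m}$. Then $J^*(g,\mu_{\zeta_m})\to J^*(g,\mu_\zeta)$; i.e. the value function is continuous under weak convergence of the priors.
   Context: $\mathbb{X},\mathbb{Y}^1,\mathbb{Y}^2$ are standard Borel spaces; $Q^i$ is a stochastic kernel (measurement channel) from $\mathbb{X}$ to $\mathbb{Y}^i$. A zero-sum game is $g=(c,\mathbb{U}^1,\mathbb{U}^2)$; policies are measurable $\gamma^i:\mathbb{Y}^i\to\mathbb{U}^i$; for an information structure $\mu$ on $\mathbb{X}\times\mathbb{Y}^1\times\mathbb{Y}^2$, $J(g,\mu,\gamma^1,\gamma^2)=\int c(x,\gamma^1(y^1),\gamma^2(y^2))\,d\mu$; Player 1 minimizes, Player 2 maximizes; a saddle point $(\gamma^{1,*},\gamma^{2,*})$ satisfies $\inf_{\gamma^1}J(g,\mu,\gamma^1,\gamma^{2,*})=J(g,\mu,\gamma^{1,*},\gamma^{2,*})=\sup_{\gamma^2}J(g,\mu,\gamma^{1,*},\gamma^2)$, and $J^*(g,\mu)$ is the cost at a saddle point. Weak convergence: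 $\int f\,d\zeta_m\to\int f\,d\zeta$ for all bounded continuous $f$. $\|\cdot\|_{TV}$: $\|P-R\|_{TV}=2\sup_B|P(B)-R(B)|$. Assumptions: A2: the cost is continuous and bounded. A4: each action space is compact. A6: the channels $Q^1,Q^2$ are fixed and conditionally independent given $x$ (so the information structure is $\zeta(dx)Q^1(dy^1|x)Q^2(dy^2|x)$), and each is continuous in total variation: $x_m\to x$ implies $\|Q^i(\cdot|x_m)-Q^i(\cdot|x)\|_{TV}\to0$. *)

theory Defs
  imports "HOL-Probability.Probability"
begin

definition borel_prob :: "'a::topological_space measure \<Rightarrow> bool" where
  "borel_prob P \<longleftrightarrow> prob_space P \<and> sets P = sets borel"

definition tv_dist :: "'a::topological_space measure \<Rightarrow> 'a measure \<Rightarrow> real" where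
  "tv_dist P R = 2 * (SUP B\<in>sets borel. \<bar>measure P B - measure R B\<bar>)"

definition stoch_kernel :: "('x::topological_space \<Rightarrow> 'y::topological_space measure) \<Rightarrow> bool" where
  "stoch_kernel Q \<longleftrightarrow> Q \<in> borel \<rightarrow>\<^sub>M prob_algebra borel"

definition tv_continuous :: "('x::topological_space \<Rightarrow> 'y::topological_space measure) \<Rightarrow> bool" where
  "tv_continuous Q \<longleftrightarrow>
     (\<forall>x xs. xs \<longlonglongrightarrow> x \<longrightarrow> (\<lambda>m. tv_dist (Q (xs m)) (Q x)) \<longlonglongrightarrow> 0)"

definition weak_conv_seq :: "(nat \<Rightarrow> 'a::topological_space measure) \<Rightarrow> 'a measure \<Rightarrow> bool" where
  "weak_conv_seq Ps P \<longleftrightarrow>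
     (\<forall>f::'a \<Rightarrow> real. continuous_on UNIV f \<and> bounded (range f) \<longrightarrow>
        (\<lambda>m. integral\<^sup>L (Ps m) f) \<longlonglongrightarrow> integral\<^sup>L P f)"

definition policies :: "'u::topological_space set \<Rightarrow> ('y::topological_space \<Rightarrow> 'u) set" where
  "policies U = {\<gamma>. \<gamma> \<in> borel_measurable borel \<and> (\<forall>y. \<gamma> y \<in> U)}"

text \<open>Expected cost J(g, mu_zeta, gamma1, gamma2) under the information structure
  mu_zeta(dx,dy1,dy2) = zeta(dx) Q1(dy1|x) Q2(dy2|x), written as the iterated integral.\<close>
definition Jcost ::
  "('x \<times> 'u1 \<times> 'u2 \<Rightarrow> real) \<Rightarrow> ('x \<Rightarrow> 'y1 measure) \<Rightarrow> ('x \<Rightarrow> 'y2 measure) \<Rightarrow>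
   'x measure \<Rightarrow> ('y1 \<Rightarrow> 'u1) \<Rightarrow> ('y2 \<Rightarrow> 'u2) \<Rightarrow> real" where
  "Jcost c Q1 Q2 \<zeta> \<gamma>1 \<gamma>2 =
     (\<integral>x. (\<integral>y1. (\<integral>y2. c (x, \<gamma>1 y1, \<gamma>2 y2) \<partial>Q2 x) \<partial>Q1 x) \<partial>\<zeta>)"

definition saddle_point ::
  "('x \<times> 'u1::topological_space \<times> 'u2::topological_space \<Rightarrow> real) \<Rightarrow> 'u1 set \<Rightarrow> 'u2 set \<Rightarrow>
   ('x \<Rightarrow> 'y1::topological_space measure) \<Rightarrow> ('x \<Rightarrow> 'y2::topological_space measure) \<Rightarrow>
   'x measure \<Rightarrow> ('y1 \<Rightarrow> 'u1) \<Rightarrow> ('y2 \<Rightarrow> 'u2) \<Rightarrow> bool" where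
  "saddle_point c U1 U2 Q1 Q2 \<zeta> \<gamma>1s \<gamma>2s \<longleftrightarrow>
     \<gamma>1s \<in> policies U1 \<and> \<gamma>2s \<in> policies U2 \<and>
     (INF \<gamma>1\<in>policies U1. Jcost c Q1 Q2 \<zeta> \<gamma>1 \<gamma>2s) = Jcost c Q1 Q2 \<zeta> \<gamma>1s \<gamma>2s \<and>
     Jcost c Q1 Q2 \<zeta> \<gamma>1s \<gamma>2s = (SUP \<gamma>2\<in>policies U2. Jcost c Q1 Q2 \<zeta> \<gamma>1s \<gamma>2)"

end

theory Submission
  imports Defs
begin

lemma int_abs_bound:
  fixes f :: "'a \<Rightarrow> real"
  assumes "prob_space M" "\<And>x. x \<in> space M \<Longrightarrow> \<bar>f x\<bar> \<le> B"
  shows "\<bar>integral\<^sup>L M f\<bar> \<le> B"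
proof (cases "integrable M f")
  case True
  interpret prob_space M by fact
  have "\<bar>integral\<^sup>L M f\<bar> \<le> integral\<^sup>L M (\<lambda>x. \<bar>f x\<bar>)" by (rule integral_abs_bound)
  also have "\<dots> \<le> integral\<^sup>L M (\<lambda>x. B)"
    by (rule integral_mono) (use True assms in auto)
  also have "\<dots> = B" by (simp add: prob_space)
  finally show ?thesis .
next
  case False
  interpret prob_space M by fact
  obtain x where "x \<in> space M" using not_empty by blast
  with assms(2)[of x] have "0 \<le> B" by simp
  with False show ?thesis by (simp add: not_integrable_integral_eq)
qed

lemma integrable_bdd:
  fixes f :: "'a \<Rightarrow> real"
  assumes "prob_space M" "f \<in> borel_measurable M" "\<And>x. x \<in> space M \<Longrightarrow> \<bar>f x\<bar> \<le> B"
  shows "integrable M f"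
proof -
  interpret prob_space M by fact
  show ?thesis by (rule integrable_const_bound[where B=B]) (use assms in auto)
qed

lemma nested_measurable:
  fixes f :: "'a \<Rightarrow> 'b \<Rightarrow> real"
  assumes f: "(\<lambda>(x, y). f x y) \<in> borel_measurable (M \<Otimes>\<^sub>M N)"
    and bnd: "\<And>x y. \<bar>f x y\<bar> \<le> B"
    and L: "L \<in> M \<rightarrow>\<^sub>M prob_algebra N"
  shows "(\<lambda>x. \<integral>y. f x y \<partial>L x) \<in> borel_measurable M"
proof -
  have Ls: "L \<in> M \<rightarrow>\<^sub>M subprob_algebra N" using L by (rule measurable_prob_algebraD)
  have f2: "(\<lambda>(x, y). f x y + B) \<in> borel_measurable (M \<Otimes>\<^sub>M N)" using f by measurable
  have m: "(\<lambda>x. \<integral>\<^sup>+y. ennreal (f x y + B) \<partial>L x) \<in> borel_measurable M"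
    using nn_integral_measurable_subprob_algebra2[where f="\<lambda>x y. ennreal (f x y + B)", OF _ Ls] f2
    by measurable
  have eq: "(\<integral>y. f x y \<partial>L x) = enn2real (\<integral>\<^sup>+y. ennreal (f x y + B) \<partial>L x) - B"
    if x: "x \<in> space M" for x
  proof -
    have Lx: "L x \<in> space (prob_algebra N)" using L x by (rule measurable_space)
    then have ps: "prob_space (L x)" and sL: "sets (L x) = sets N" by (auto simp: space_prob_algebra)
    have fx: "f x \<in> borel_measurable N"
      using measurable_Pair2[OF f x] by simp
    then have fx': "f x \<in> borel_measurable (L x)" by (subst measurable_cong_sets[OF sL refl])
    have int: "integrable (L x) (f x)" by (rule integrable_bdd[OF ps fx']) (use bnd in auto)
    interpret prob_space "L x" by fact
    have "(\<integral>y. f x y + B \<partial>L x) = enn2real (\<integral>\<^sup>+y. ennreal (f x y + B) \<partial>L x)"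
    proof (rule integral_eq_nn_integral)
      show "(\<lambda>y. f x y + B) \<in> borel_measurable (L x)" using fx' by measurable
      show "AE y in L x. 0 \<le> f x y + B" using bnd[of x] by (intro AE_I2) (smt (verit))
    qed
    moreover have "(\<integral>y. f x y + B \<partial>L x) = (\<integral>y. f x y \<partial>L x) + B"
      using int by (simp add: prob_space)
    ultimately show ?thesis by simp
  qed
  show ?thesis
    by (rule measurable_cong[THEN iffD2, OF eq]) (use m in auto)
qed


lemma card_floor:
  assumes "0 \<le> t" "t \<le> real n"
  shows "card {k\<in>{1..n}. real k \<le> t} = nat \<lfloor>t\<rfloor>"
proof -
  have "\<lfloor>t\<rfloor> \<le> \<lfloor>real n\<rfloor>" by (rule floor_mono) (fact assms(2))
  then have fl: "nat \<lfloor>t\<rfloor> \<le> n" by simp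
  have key: "k \<le> nat \<lfloor>t\<rfloor> \<longleftrightarrow> real k \<le> t" for k
    using le_floor_iff[of "int k" t] assms(1) by (simp add: le_nat_iff)
  have eq: "{k\<in>{1..n}. real k \<le> t} = {1..nat \<lfloor>t\<rfloor>}"
  proof (rule set_eqI)
    fix k
    have a: "real k \<le> t \<Longrightarrow> k \<le> n" using assms(2) by (meson of_nat_le_iff order.trans)
    have "k \<in> {k\<in>{1..n}. real k \<le> t} \<longleftrightarrow> 1 \<le> k \<and> real k \<le> t" using a by auto
    also have "\<dots> \<longleftrightarrow> 1 \<le> k \<and> k \<le> nat \<lfloor>t\<rfloor>" using key[of k] by simp
    also have "\<dots> \<longleftrightarrow> k \<in> {1..nat \<lfloor>t\<rfloor>}" by simp
    finally show "k \<in> {k\<in>{1..n}. real k \<le> t} \<longleftrightarrow> k \<in> {1..nat \<lfloor>t\<rfloor>}" .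
  qed
  show ?thesis unfolding eq by simp
qed

lemma sum_if_card:
  "(\<Sum>k\<in>{1..n}. (if real k \<le> t then 1 else 0::real)) = real (card {k\<in>{1..n}. real k \<le> t})"
  using sum.inter_filter[of "{1..n}" "\<lambda>_. 1::real" "\<lambda>k. real k \<le> t"] by simp

lemma tv_sup_bound:
  fixes P Q :: "'a::topological_space measure"
  assumes P: "prob_space P" "sets P = sets borel" and Q: "prob_space Q" "sets Q = sets borel"
    and A: "A \<in> sets borel"
  shows "\<bar>measure P A - measure Q A\<bar> \<le> (SUP B\<in>sets borel. \<bar>measure P B - measure Q B\<bar>)"
proof (rule cSUP_upper[OF A])
  show "bdd_above ((\<lambda>B. \<bar>measure P B - measure Q B\<bar>) ` sets borel)"
  proof (rule bdd_aboveI2)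
    fix B :: "'a set" assume "B \<in> sets borel"
    have "measure P B \<le> 1" "measure Q B \<le> 1"
      using prob_space.prob_le_1 P Q by auto
    then show "\<bar>measure P B - measure Q B\<bar> \<le> 1"
      using measure_nonneg[of P B] measure_nonneg[of Q B] by (smt (verit))
  qed
qed

lemma intfn_gen:
  fixes R :: "'a::topological_space measure" and c :: real
  assumes R: "prob_space R" "sets R = sets borel" and Ab: "\<And>k. A k \<in> sets borel"
  shows "integral\<^sup>L R (\<lambda>y. c * (\<Sum>k\<in>I. indicator (A k) y)) = c * (\<Sum>k\<in>I. measure R (A k))"
  proof -
    have sp: "space R = UNIV" using sets_eq_imp_space_eq[OF R(2)] by simp
    have ii: "integrable R (indicator (A k) :: _ \<Rightarrow> real)" for k
    proof -
      have "indicator (A k) \<in> borel_measurable R"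
        unfolding measurable_cong_sets[OF R(2) refl] using Ab by measurable
      then show ?thesis by (rule integrable_bdd[OF R(1), where B=1]) (simp add: indicator_def)
    qed
    have "integral\<^sup>L R (\<lambda>y. c * (\<Sum>k\<in>I. indicator (A k) y)) = c * integral\<^sup>L R (\<lambda>y. \<Sum>k\<in>I. indicator (A k) y)"
      by (rule integral_mult_right_zero)
    also have "integral\<^sup>L R (\<lambda>y. \<Sum>k\<in>I. indicator (A k) y) = (\<Sum>k\<in>I. integral\<^sup>L R (indicator (A k)) :: real)"
      by (rule Bochner_Integration.integral_sum) (rule ii)
    also have "\<dots> = (\<Sum>k\<in>I. measure R (A k))"
      by (simp add: sp)
    finally show ?thesis .
  qed

lemma tv_bound_nonneg:
  fixes f :: "'y::topological_space \<Rightarrow> real"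
  assumes P: "prob_space P" "sets P = sets borel" and Q: "prob_space Q" "sets Q = sets borel"
    and f: "f \<in> borel_measurable borel" and f0: "\<And>y. 0 \<le> f y" and fM: "\<And>y. f y \<le> M" and M: "0 < M"
  shows "\<bar>integral\<^sup>L P f - integral\<^sup>L Q f\<bar> \<le> M * (SUP B\<in>sets borel. \<bar>measure P B - measure Q B\<bar>)"
    (is "?d \<le> M * ?s")
proof (rule field_le_epsilon)
  fix e :: real assume e: "0 < e"
  obtain n :: nat where n: "2 * M / e < real n" using reals_Archimedean2 by blast
  have npos: "0 < real n" using n M e by (smt (verit) divide_pos_pos)
  define A where "A k = {y. real k * M / real n \<le> f y}" for k :: nat
  have Ab: "A k \<in> sets borel" for k unfolding A_def using f by measurable
  define fn where "fn y = (M / real n) * (\<Sum>k\<in>{1..n}. indicator (A k) y)" for y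
  have fn_m: "fn \<in> borel_measurable borel" unfolding fn_def using Ab by measurable
  have cnt: "0 \<le> f y - fn y \<and> f y - fn y \<le> M / real n" for y
  proof -
    define t where "t = real n * f y / M"
    have t0: "0 \<le> t" unfolding t_def using f0[of y] M npos by simp
    have tn: "t \<le> real n" unfolding t_def using fM[of y] M npos
      by (simp add: divide_le_eq mult_left_mono)
    have ind: "indicator (A k) y = (if real k \<le> t then 1 else 0::real)" for k
      unfolding A_def t_def indicator_def using M npos
      by (auto simp: field_simps)
    have S: "(\<Sum>k\<in>{1..n}. indicator (A k) y) = real (nat \<lfloor>t\<rfloor>)"
      unfolding ind sum_if_card card_floor[OF t0 tn] ..
    have fy: "f y = (M / real n) * t" unfolding t_def using M npos by simp
    have a: "0 \<le> t - real (nat \<lfloor>t\<rfloor>)" "t - real (nat \<lfloor>t\<rfloor>) \<le> 1" using t0 by linarith+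
    have c: "0 \<le> M / real n" using M npos by simp
    have "f y - fn y = (M / real n) * (t - real (nat \<lfloor>t\<rfloor>))"
      unfolding fn_def S fy by (simp add: right_diff_distrib)
    then show ?thesis using mult_nonneg_nonneg[OF c a(1)] mult_left_le[OF a(2) c] by linarith
  qed
  have fn_int: "fn \<in> borel_measurable borel" by (fact fn_m)
  have err: "\<bar>integral\<^sup>L R f - integral\<^sup>L R fn\<bar> \<le> M / real n"
    if R: "prob_space R" "sets R = sets borel" for R
  proof -
    have mf: "f \<in> borel_measurable R" "fn \<in> borel_measurable R"
      unfolding measurable_cong_sets[OF R(2) refl] using f fn_m by auto
    have bf: "\<bar>f y\<bar> \<le> M" for y using f0[of y] fM[of y] by simp
    have bfn: "\<bar>fn y\<bar> \<le> M + M / real n" for y using cnt[of y] bf[of y] by (simp add: abs_le_iff)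
    have i1: "integrable R f" by (rule integrable_bdd[OF R(1) mf(1) bf])
    have i2: "integrable R fn" by (rule integrable_bdd[OF R(1) mf(2) bfn])
    have "integral\<^sup>L R f - integral\<^sup>L R fn = integral\<^sup>L R (\<lambda>y. f y - fn y)"
      using i1 i2 by simp
    also have "\<bar>\<dots>\<bar> \<le> M / real n"
      by (rule int_abs_bound[OF R(1)]) (use cnt in \<open>auto simp: abs_le_iff\<close>)
    finally show ?thesis .
  qed
  have intfn: "integral\<^sup>L R fn = (M / real n) * (\<Sum>k\<in>{1..n}. measure R (A k))"
    if R: "prob_space R" "sets R = sets borel" for R
    unfolding fn_def by (rule intfn_gen[OF R Ab])
  have "\<bar>integral\<^sup>L P fn - integral\<^sup>L Q fn\<bar> = (M / real n) * \<bar>\<Sum>k\<in>{1..n}. measure P (A k) - measure Q (A k)\<bar>"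
  proof -
    have e1: "(M / real n) * (\<Sum>k\<in>{1..n}. measure P (A k)) - (M / real n) * (\<Sum>k\<in>{1..n}. measure Q (A k))
        = (M / real n) * (\<Sum>k\<in>{1..n}. measure P (A k) - measure Q (A k))"
      by (simp only: sum_subtractf right_diff_distrib)
    have "0 \<le> M / real n" using M npos by simp
    then show ?thesis unfolding intfn[OF P] intfn[OF Q] e1 abs_mult using M by simp
  qed
  also have "\<dots> \<le> (M / real n) * (\<Sum>k\<in>{1..n}. ?s)"
  proof (rule mult_left_mono)
    have "\<bar>\<Sum>k\<in>{1..n}. measure P (A k) - measure Q (A k)\<bar> \<le> (\<Sum>k\<in>{1..n}. \<bar>measure P (A k) - measure Q (A k)\<bar>)"
      by (rule sum_abs)
    also have "\<dots> \<le> (\<Sum>k\<in>{1..n}. ?s)"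
      by (rule sum_mono) (rule tv_sup_bound[OF P Q Ab])
    finally show "\<bar>\<Sum>k\<in>{1..n}. measure P (A k) - measure Q (A k)\<bar> \<le> (\<Sum>k\<in>{1..n}. ?s)" .
    show "0 \<le> M / real n" using M npos by simp
  qed
  also have "\<dots> = M * ?s" using npos by simp
  finally have mid: "\<bar>integral\<^sup>L P fn - integral\<^sup>L Q fn\<bar> \<le> M * ?s" .
  have "?d \<le> \<bar>integral\<^sup>L P f - integral\<^sup>L P fn\<bar> + \<bar>integral\<^sup>L P fn - integral\<^sup>L Q fn\<bar> + \<bar>integral\<^sup>L Q f - integral\<^sup>L Q fn\<bar>"
    by linarith
  also have "\<dots> \<le> M / real n + M * ?s + M / real n"
    using err[OF P] err[OF Q] mid by linarith
  also have "M / real n + M * ?s + M / real n \<le> M * ?s + e"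
  proof -
    have "2 * M < e * real n" using n e by (simp add: divide_less_eq mult.commute)
    then have "2 * M / real n < e" using npos by (simp add: divide_less_eq mult.commute)
    then show ?thesis by simp
  qed
  finally show "?d \<le> M * ?s + e" .
qed

lemma tv_bound:
  fixes f :: "'y::topological_space \<Rightarrow> real"
  assumes P: "prob_space P" "sets P = sets borel" and Q: "prob_space Q" "sets Q = sets borel"
    and f: "f \<in> borel_measurable borel" and fB: "\<And>y. \<bar>f y\<bar> \<le> B"
  shows "\<bar>integral\<^sup>L P f - integral\<^sup>L Q f\<bar> \<le> B * tv_dist P Q"
proof (cases "B = 0")
  case True
  have f0: "f = (\<lambda>y. 0)" using fB True by (intro ext) simp
  show ?thesis by (simp add: f0 True)
next
  case False
  have "0 \<le> B" using fB[of undefined] abs_ge_zero order.trans by blast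
  with False have B: "0 < B" by simp
  define g where "g y = f y + B" for y
  have spP: "space P = UNIV" using sets_eq_imp_space_eq[OF P(2)] by simp
  have spQ: "space Q = UNIV" using sets_eq_imp_space_eq[OF Q(2)] by simp
  have ig: "integral\<^sup>L R g = integral\<^sup>L R f + B" if R: "prob_space R" "sets R = sets borel" for R
  proof -
    interpret prob_space R by fact
    have "f \<in> borel_measurable R" unfolding measurable_cong_sets[OF R(2) refl] by (fact f)
    then have "integrable R f" using fB by (intro integrable_bdd[OF R(1)]) auto
    then show ?thesis unfolding g_def by (simp add: prob_space)
  qed
  have "\<bar>integral\<^sup>L P g - integral\<^sup>L Q g\<bar> \<le> (2*B) * (SUP B\<in>sets borel. \<bar>measure P B - measure Q B\<bar>)"
  proof (rule tv_bound_nonneg[OF P Q])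
    show "g \<in> borel_measurable borel" unfolding g_def using f by measurable
    show "0 \<le> g y" for y unfolding g_def using fB[of y] by linarith
    show "g y \<le> 2 * B" for y unfolding g_def using fB[of y] by linarith
    show "0 < 2 * B" using B by simp
  qed
  then show ?thesis unfolding ig[OF P] ig[OF Q] tv_dist_def by simp
qed


lemma bp_facts:
  assumes "borel_prob \<mu>"
  shows "prob_space \<mu>" "sets \<mu> = sets borel" "space \<mu> = UNIV"
  using assms sets_eq_imp_space_eq[of \<mu> borel] unfolding borel_prob_def by auto

lemma bp_integrable:
  fixes f :: "'a::topological_space \<Rightarrow> real"
  assumes "borel_prob \<mu>" "f \<in> borel_measurable borel" "\<And>x. \<bar>f x\<bar> \<le> C"
  shows "integrable \<mu> f"
proof (rule integrable_bdd[OF bp_facts(1)[OF assms(1)]])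
  show "f \<in> borel_measurable \<mu>" unfolding measurable_cong_sets[OF bp_facts(2)[OF assms(1)] refl]
    by (fact assms(2))
  show "\<bar>f x\<bar> \<le> C" for x by (fact assms(3))
qed

lemma tight:
  fixes \<zeta> :: "'x::polish_space measure"
  assumes "borel_prob \<zeta>" "0 < \<eta>"
  shows "\<exists>K. compact K \<and> measure \<zeta> (UNIV - K) \<le> \<eta>"
proof (cases "1 \<le> \<eta>")
  case True
  interpret prob_space \<zeta> using bp_facts[OF assms(1)] by simp
  show ?thesis
  proof (intro exI conjI)
    show "compact ({}::'x set)" by simp
    show "measure \<zeta> (UNIV - {}) \<le> \<eta>" using prob_le_1[of "UNIV - {}"] True by linarith
  qed
next
  case False
  interpret prob_space \<zeta> using bp_facts[OF assms(1)] by simp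
  have sp: "space \<zeta> = UNIV" "sets \<zeta> = sets borel" using bp_facts[OF assms(1)] by auto
  have "emeasure \<zeta> UNIV = (SUP K \<in> {K. K \<subseteq> UNIV \<and> compact K}. emeasure \<zeta> K)"
    by (rule inner_regular) (use sp in auto)
  moreover have "emeasure \<zeta> UNIV = 1" using emeasure_space_1 sp by simp
  moreover have "ennreal (1 - \<eta>) < 1" using False assms(2) by (simp add: ennreal_lessI)
  ultimately obtain K where K: "compact K" "ennreal (1 - \<eta>) < emeasure \<zeta> K"
    by (metis (no_types, lifting) less_SUP_iff mem_Collect_eq)
  have "1 - \<eta> < measure \<zeta> K"
    using K(2) False by (simp add: emeasure_eq_measure ennreal_less_iff)
  moreover have Kb: "K \<in> events" using K(1) sp by (simp add: compact_imp_closed borel_closed)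
  moreover have "measure \<zeta> (UNIV - K) = 1 - measure \<zeta> K"
    using prob_compl[OF Kb] sp by simp
  ultimately show ?thesis using K(1) by (intro exI[of _ K]) simp
qed

lemma unif_conv:
  fixes Fs :: "'i \<Rightarrow> 'x::polish_space \<Rightarrow> real" and \<zeta> :: "'x measure"
  assumes prior: "borel_prob \<zeta>" "\<And>m. borel_prob (\<zeta>s m)"
    and weak: "weak_conv_seq \<zeta>s \<zeta>"
    and meas: "\<And>i. i \<in> I \<Longrightarrow> Fs i \<in> borel_measurable borel"
    and bnd: "\<And>i x. i \<in> I \<Longrightarrow> \<bar>Fs i x\<bar> \<le> B"
    and B: "0 < B"
    and eqc: "\<And>x e. 0 < e \<Longrightarrow> \<exists>d>0. \<forall>x'. dist x' x < d \<longrightarrow> (\<forall>i\<in>I. \<bar>Fs i x' - Fs i x\<bar> \<le> e)"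
    and e: "0 < e"
  shows "\<exists>N. \<forall>m\<ge>N. \<forall>i\<in>I. \<bar>integral\<^sup>L (\<zeta>s m) (Fs i) - integral\<^sup>L \<zeta> (Fs i)\<bar> \<le> e"
proof -
  define \<eta> where "\<eta> = e / (3 * B + 3)"
  have \<eta>: "0 < \<eta>" unfolding \<eta>_def using e B by simp
  have e_eq: "e = 3 * \<eta> + 3 * B * \<eta>"
  proof -
    have nz: "3 * B + 3 \<noteq> 0" using B by simp
    have "3 * \<eta> + 3 * B * \<eta> = (3 * B + 3) * \<eta>" by (simp add: algebra_simps)
    also have "\<dots> = e" unfolding \<eta>_def using nz by simp
    finally show ?thesis by simp
  qed
  obtain K where K: "compact K" "measure \<zeta> (UNIV - K) \<le> \<eta>" using tight[OF prior(1) \<eta>] by blast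
  have ex: "\<forall>x. \<exists>d. 0 < d \<and> (\<forall>x'. dist x' x < d \<longrightarrow> (\<forall>i\<in>I. \<bar>Fs i x' - Fs i x\<bar> \<le> \<eta>))"
    using eqc[OF \<eta>] by blast
  obtain d where d: "\<forall>x. 0 < d x \<and> (\<forall>x'. dist x' x < d x \<longrightarrow> (\<forall>i\<in>I. \<bar>Fs i x' - Fs i x\<bar> \<le> \<eta>))"
    using choice[OF ex] by blast
  have dpos: "0 < d x" for x using d by blast
  have dcl: "\<And>x' x i. dist x' x < d x \<Longrightarrow> i \<in> I \<Longrightarrow> \<bar>Fs i x' - Fs i x\<bar> \<le> \<eta>" using d by blast
  have "K \<subseteq> (\<Union>x\<in>K. ball x (d x / 2))" using dpos by auto
  then obtain S where S: "S \<subseteq> K" "finite S" "K \<subseteq> (\<Union>s\<in>S. ball s (d s / 2))"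
    using compactE_image[OF K(1), of K "\<lambda>x. ball x (d x / 2)"] by blast
  define w where "w s x = max 0 (d s - dist x s)" for s x
  define W where "W x = (\<Sum>s\<in>S. w s x)" for x
  define \<rho> where "\<rho> = (if S = {} then 1 else Min ((\<lambda>s. d s / 2) ` S))"
  define Den where "Den x = max (W x) \<rho>" for x
  define \<phi> where "\<phi> s x = w s x / Den x" for s x
  define h where "h x = 1 - (\<Sum>s\<in>S. \<phi> s x)" for x
  have \<rho>: "0 < \<rho>" unfolding \<rho>_def using S(2) dpos by (auto simp: Min_gr_iff)
  have \<rho>le: "\<rho> \<le> d s / 2" if "s \<in> S" for s
  proof -
    have "Min ((\<lambda>s. d s / 2) ` S) \<le> d s / 2" using that S(2) by (intro Min_le) auto
    then show ?thesis unfolding \<rho>_def using that by auto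
  qed
  have w0: "0 \<le> w s x" for s x unfolding w_def by simp
  have Den: "0 < Den x" "W x \<le> Den x" for x unfolding Den_def using \<rho> by auto
  have \<phi>0: "0 \<le> \<phi> s x" for s x unfolding \<phi>_def using w0[of s x] Den(1)[of x] by (simp add: divide_nonneg_pos)
  have sum\<phi>: "(\<Sum>s\<in>S. \<phi> s x) = W x / Den x" for x
    unfolding \<phi>_def W_def by (simp add: sum_divide_distrib)
  have sum\<phi>1: "(\<Sum>s\<in>S. \<phi> s x) \<le> 1" for x
    unfolding sum\<phi> using Den[of x] by simp
  have sum\<phi>0: "0 \<le> (\<Sum>s\<in>S. \<phi> s x)" for x by (rule sum_nonneg) (use \<phi>0 in auto)
  have h01: "0 \<le> h x" "h x \<le> 1" for x unfolding h_def using sum\<phi>1[of x] sum\<phi>0[of x] by auto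
  have hK: "h x = 0" if xK: "x \<in> K" for x
  proof -
    obtain s where s: "s \<in> S" "dist s x < d s / 2" using S(3) xK by auto
    have ds: "dist x s < d s / 2" using s(2) by (simp add: dist_commute)
    have "d s / 2 \<le> w s x" unfolding w_def using ds by (simp add: max_def)
    also have "w s x \<le> W x" unfolding W_def
      by (rule member_le_sum) (use s(1) S(2) w0 in auto)
    finally have "\<rho> \<le> W x" using \<rho>le[OF s(1)] by simp
    then have "Den x = W x" unfolding Den_def by simp
    then show ?thesis unfolding h_def sum\<phi> using Den(1)[of x] by simp
  qed
  have \<phi>pos: "dist x s < d s" if "0 < \<phi> s x" for s x
  proof -
    have "0 < w s x" using that Den(1)[of x] unfolding \<phi>_def by (simp add: zero_less_divide_iff)
    then show ?thesis unfolding w_def by simp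
  qed
  have cont_w: "continuous_on UNIV (w s)" for s unfolding w_def by (intro continuous_intros)
  have cont_Den: "continuous_on UNIV Den" unfolding Den_def W_def w_def by (intro continuous_intros)
  have cont_\<phi>: "continuous_on UNIV (\<phi> s)" for s
    unfolding \<phi>_def using Den(1) by (intro continuous_intros cont_w cont_Den) (metis less_irrefl)
  have cont_h: "continuous_on UNIV h" unfolding h_def by (intro continuous_intros cont_\<phi>)
  have \<phi>1: "\<phi> s x \<le> 1" if "s \<in> S" for s x
    using sum_nonneg_leq_bound[OF S(2), of "\<lambda>s. \<phi> s x" "(\<Sum>s\<in>S. \<phi> s x)" s] \<phi>0 sum\<phi>1[of x] that by force
  have bdd_\<phi>: "\<bar>\<phi> s x\<bar> \<le> 1" if "s \<in> S" for s x using \<phi>0[of s x] \<phi>1[OF that] by simp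
  have bdd_h: "\<bar>h x\<bar> \<le> 1" for x using h01[of x] by simp
  have meas_\<phi>: "\<phi> s \<in> borel_measurable borel" for s using cont_\<phi> by (rule borel_measurable_continuous_onI)
  have meas_h: "h \<in> borel_measurable borel" using cont_h by (rule borel_measurable_continuous_onI)
  have brange: "bounded (range f)" if "\<And>x. \<bar>f x\<bar> \<le> 1" for f :: "'x \<Rightarrow> real"
    unfolding bounded_iff using that by auto
  have wk: "(\<lambda>m. integral\<^sup>L (\<zeta>s m) f) \<longlonglongrightarrow> integral\<^sup>L \<zeta> f"
    if "continuous_on UNIV f" "\<And>x. \<bar>f x\<bar> \<le> 1" for f :: "'x \<Rightarrow> real"
  proof -
    have "bounded (range f)" by (rule brange) (fact that(2))
    then show ?thesis using weak that(1) unfolding weak_conv_seq_def by blast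
  qed
  define G where "G i x = (\<Sum>s\<in>S. \<phi> s x * Fs i s)" for i x
  have pt: "\<bar>Fs i x - G i x\<bar> \<le> \<eta> + B * h x" if i: "i \<in> I" for i x
  proof -
    have split: "Fs i x - G i x = Fs i x * h x + (\<Sum>s\<in>S. \<phi> s x * (Fs i x - Fs i s))"
      unfolding G_def h_def by (simp add: right_diff_distrib sum_subtractf sum_distrib_right sum_distrib_left algebra_simps)
    have a1: "\<bar>Fs i x * h x\<bar> \<le> B * h x"
      using bnd[OF i, of x] h01[of x] by (simp add: abs_mult mult_right_mono)
    have "\<bar>\<Sum>s\<in>S. \<phi> s x * (Fs i x - Fs i s)\<bar> \<le> (\<Sum>s\<in>S. \<bar>\<phi> s x * (Fs i x - Fs i s)\<bar>)"
      by (rule sum_abs)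
    also have "\<dots> \<le> (\<Sum>s\<in>S. \<phi> s x * \<eta>)"
    proof (rule sum_mono)
      fix s assume "s \<in> S"
      show "\<bar>\<phi> s x * (Fs i x - Fs i s)\<bar> \<le> \<phi> s x * \<eta>"
      proof (cases "\<phi> s x = 0")
        case True then show ?thesis by simp
      next
        case False
        then have "0 < \<phi> s x" using \<phi>0[of s x] by simp
        then have "\<bar>Fs i x - Fs i s\<bar> \<le> \<eta>" using dcl[OF \<phi>pos i] by blast
        then show ?thesis using \<phi>0[of s x] by (simp add: abs_mult mult_left_mono)
      qed
    qed
    also have "\<dots> = \<eta> * (\<Sum>s\<in>S. \<phi> s x)" by (simp add: sum_distrib_left mult.commute)
    also have "\<dots> \<le> \<eta>" using sum\<phi>1[of x] \<eta> by (simp add: mult_left_le)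
    finally have a2: "\<bar>\<Sum>s\<in>S. \<phi> s x * (Fs i x - Fs i s)\<bar> \<le> \<eta>" .
    show ?thesis unfolding split using a1 a2 by linarith
  qed
  have bddG: "\<bar>G i x\<bar> \<le> B" if i: "i \<in> I" for i x
  proof -
    have "\<bar>G i x\<bar> \<le> (\<Sum>s\<in>S. \<bar>\<phi> s x * Fs i s\<bar>)" unfolding G_def by (rule sum_abs)
    also have "\<dots> \<le> (\<Sum>s\<in>S. \<phi> s x * B)"
      by (rule sum_mono) (use \<phi>0 bnd[OF i] in \<open>simp add: abs_mult mult_left_mono\<close>)
    also have "\<dots> = B * (\<Sum>s\<in>S. \<phi> s x)" by (simp add: sum_distrib_left mult.commute)
    also have "\<dots> \<le> B" using sum\<phi>1[of x] B by (simp add: mult_left_le)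
    finally show ?thesis .
  qed
  have measG: "G i \<in> borel_measurable borel" for i unfolding G_def using meas_\<phi> by measurable
  have intFG: "\<bar>integral\<^sup>L \<mu> (Fs i) - integral\<^sup>L \<mu> (G i)\<bar> \<le> \<eta> + B * integral\<^sup>L \<mu> h"
    if \<mu>: "borel_prob \<mu>" and i: "i \<in> I" for \<mu> i
  proof -
    interpret prob_space \<mu> using bp_facts[OF \<mu>] by simp
    have iF: "integrable \<mu> (Fs i)" by (rule bp_integrable[OF \<mu> meas[OF i] bnd[OF i]])
    have iG: "integrable \<mu> (G i)" by (rule bp_integrable[OF \<mu> measG bddG[OF i]])
    have ih: "integrable \<mu> h" by (rule bp_integrable[OF \<mu> meas_h bdd_h])
    have "integral\<^sup>L \<mu> (Fs i) - integral\<^sup>L \<mu> (G i) = integral\<^sup>L \<mu> (\<lambda>x. Fs i x - G i x)"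
      using iF iG by simp
    also have "\<bar>\<dots>\<bar> \<le> integral\<^sup>L \<mu> (\<lambda>x. \<bar>Fs i x - G i x\<bar>)" by (rule integral_abs_bound)
    also have "\<dots> \<le> integral\<^sup>L \<mu> (\<lambda>x. \<eta> + B * h x)"
      by (rule integral_mono) (use iF iG ih pt[OF i] in auto)
    also have "\<dots> = \<eta> + B * integral\<^sup>L \<mu> h" using ih by (simp add: prob_space)
    finally show ?thesis .
  qed
  have intG: "integral\<^sup>L \<mu> (G i) = (\<Sum>s\<in>S. Fs i s * integral\<^sup>L \<mu> (\<phi> s))"
    if \<mu>: "borel_prob \<mu>" for \<mu> i
  proof -
    have "integral\<^sup>L \<mu> (G i) = (\<Sum>s\<in>S. integral\<^sup>L \<mu> (\<lambda>x. \<phi> s x * Fs i s))"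
      unfolding G_def
      by (rule Bochner_Integration.integral_sum)
         (use bp_integrable[OF \<mu> meas_\<phi> bdd_\<phi>] in \<open>auto intro: integrable_mult_left\<close>)
    also have "\<dots> = (\<Sum>s\<in>S. Fs i s * integral\<^sup>L \<mu> (\<phi> s))" by (simp add: mult.commute)
    finally show ?thesis .
  qed
  have hz: "integral\<^sup>L \<zeta> h \<le> \<eta>"
  proof -
    interpret prob_space \<zeta> using bp_facts[OF prior(1)] by simp
    have sp: "space \<zeta> = UNIV" "sets \<zeta> = sets borel" using bp_facts[OF prior(1)] by auto
    have Kb: "UNIV - K \<in> sets \<zeta>" using K(1) sp by (simp add: compact_imp_closed borel_closed)
    have "integral\<^sup>L \<zeta> h \<le> integral\<^sup>L \<zeta> (indicator (UNIV - K))"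
    proof (rule integral_mono)
      show "integrable \<zeta> h" by (rule bp_integrable[OF prior(1) meas_h bdd_h])
      show "integrable \<zeta> (indicator (UNIV - K) :: _ \<Rightarrow> real)"
        using Kb by (simp add: integrable_indicator_iff less_top[symmetric])
      show "h x \<le> indicator (UNIV - K) x" for x using hK[of x] h01[of x] by (cases "x \<in> K") auto
    qed
    also have "\<dots> = measure \<zeta> (UNIV - K)" using sp by simp
    finally show ?thesis using K(2) by simp
  qed
  define D where "D m = (\<Sum>s\<in>S. \<bar>integral\<^sup>L (\<zeta>s m) (\<phi> s) - integral\<^sup>L \<zeta> (\<phi> s)\<bar>)
      + \<bar>integral\<^sup>L (\<zeta>s m) h - integral\<^sup>L \<zeta> h\<bar>" for m
  have lim1: "(\<lambda>m. \<bar>integral\<^sup>L (\<zeta>s m) f - integral\<^sup>L \<zeta> f\<bar>) \<longlonglongrightarrow> 0"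
    if "continuous_on UNIV f" "\<And>x. \<bar>f x\<bar> \<le> 1" for f :: "'x \<Rightarrow> real"
    using tendsto_rabs_zero[OF LIM_zero[OF wk[OF that]]] .
  have "D \<longlonglongrightarrow> (\<Sum>s\<in>S. 0) + 0"
    unfolding D_def
  proof (intro tendsto_add tendsto_sum)
    show "(\<lambda>m. \<bar>integral\<^sup>L (\<zeta>s m) (\<phi> s) - integral\<^sup>L \<zeta> (\<phi> s)\<bar>) \<longlonglongrightarrow> 0" if "s \<in> S" for s
      by (rule lim1[OF cont_\<phi> bdd_\<phi>[OF that]])
    show "(\<lambda>m. \<bar>integral\<^sup>L (\<zeta>s m) h - integral\<^sup>L \<zeta> h\<bar>) \<longlonglongrightarrow> 0"
      by (rule lim1[OF cont_h bdd_h])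
  qed
  then have "D \<longlonglongrightarrow> 0" by simp
  moreover have "0 < \<eta> / (B + 1)" using \<eta> B by simp
  ultimately have "eventually (\<lambda>m. D m < \<eta> / (B + 1)) sequentially"
    by (rule order_tendstoD(2))
  then obtain N where N: "\<And>m. m \<ge> N \<Longrightarrow> D m < \<eta> / (B + 1)"
    unfolding eventually_sequentially by blast
  have Bfrac: "B * (\<eta> / (B + 1)) \<le> \<eta>" "\<eta> / (B + 1) \<le> \<eta>"
    using B \<eta> by (simp_all add: field_simps)
  show ?thesis
  proof (intro exI allI impI ballI)
    fix m i assume m: "N \<le> m" and i: "i \<in> I"
    define \<Sigma> where "\<Sigma> = (\<Sum>s\<in>S. \<bar>integral\<^sup>L (\<zeta>s m) (\<phi> s) - integral\<^sup>L \<zeta> (\<phi> s)\<bar>)"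
    have \<Sigma>0: "0 \<le> \<Sigma>" unfolding \<Sigma>_def by (rule sum_nonneg) simp
    have Dm: "\<Sigma> + \<bar>integral\<^sup>L (\<zeta>s m) h - integral\<^sup>L \<zeta> h\<bar> < \<eta> / (B + 1)"
      using N[OF m] unfolding D_def \<Sigma>_def .
    have B\<Sigma>: "B * \<Sigma> \<le> \<eta>"
      using mult_left_mono[of \<Sigma> "\<eta> / (B + 1)" B] Dm B Bfrac(1) by linarith
    have hm: "integral\<^sup>L (\<zeta>s m) h \<le> 2 * \<eta>" using Dm \<Sigma>0 Bfrac(2) hz by linarith
    have GG: "\<bar>integral\<^sup>L (\<zeta>s m) (G i) - integral\<^sup>L \<zeta> (G i)\<bar> \<le> B * \<Sigma>"
    proof -
      have "integral\<^sup>L (\<zeta>s m) (G i) - integral\<^sup>L \<zeta> (G i) =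
          (\<Sum>s\<in>S. Fs i s * (integral\<^sup>L (\<zeta>s m) (\<phi> s) - integral\<^sup>L \<zeta> (\<phi> s)))"
        unfolding intG[OF prior(2)] intG[OF prior(1)] by (simp add: right_diff_distrib sum_subtractf)
      also have "\<bar>\<dots>\<bar> \<le> (\<Sum>s\<in>S. \<bar>Fs i s * (integral\<^sup>L (\<zeta>s m) (\<phi> s) - integral\<^sup>L \<zeta> (\<phi> s))\<bar>)"
        by (rule sum_abs)
      also have "\<dots> \<le> (\<Sum>s\<in>S. B * \<bar>integral\<^sup>L (\<zeta>s m) (\<phi> s) - integral\<^sup>L \<zeta> (\<phi> s)\<bar>)"
        by (rule sum_mono) (use bnd[OF i] in \<open>simp add: abs_mult mult_right_mono\<close>)
      also have "\<dots> = B * \<Sigma>" unfolding \<Sigma>_def by (simp add: sum_distrib_left)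
      finally show ?thesis .
    qed
    have A1: "\<bar>integral\<^sup>L (\<zeta>s m) (Fs i) - integral\<^sup>L (\<zeta>s m) (G i)\<bar> \<le> \<eta> + B * (2 * \<eta>)"
      using intFG[OF prior(2) i, of m] mult_left_mono[OF hm, of B] B by linarith
    have A3: "\<bar>integral\<^sup>L \<zeta> (Fs i) - integral\<^sup>L \<zeta> (G i)\<bar> \<le> \<eta> + B * \<eta>"
      using intFG[OF prior(1) i] mult_left_mono[OF hz, of B] B by linarith
    show "\<bar>integral\<^sup>L (\<zeta>s m) (Fs i) - integral\<^sup>L \<zeta> (Fs i)\<bar> \<le> e"
      unfolding e_eq using A1 A3 GG B\<Sigma> by linarith
  qed
qed


lemma diff_bound:
  fixes f g :: "'a \<Rightarrow> real"
  assumes M: "prob_space M" and mf: "f \<in> borel_measurable M" and mg: "g \<in> borel_measurable M"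
    and bf: "\<And>y. \<bar>f y\<bar> \<le> C" and bg: "\<And>y. \<bar>g y\<bar> \<le> C"
    and d: "\<And>y. \<bar>f y - g y\<bar> \<le> e"
  shows "\<bar>integral\<^sup>L M f - integral\<^sup>L M g\<bar> \<le> e"
proof -
  have "integrable M f" "integrable M g"
    using integrable_bdd[OF M mf, of C] integrable_bdd[OF M mg, of C] bf bg by auto
  then have "integral\<^sup>L M f - integral\<^sup>L M g = integral\<^sup>L M (\<lambda>y. f y - g y)" by simp
  also have "\<bar>\<dots>\<bar> \<le> e" by (rule int_abs_bound[OF M]) (rule d)
  finally show ?thesis .
qed

lemma kernel_facts:
  assumes "stoch_kernel Q"
  shows "prob_space (Q x)" "sets (Q x) = sets borel" "Q x \<in> space (prob_algebra borel)"
proof -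
  have "Q x \<in> space (prob_algebra borel)"
    using assms measurable_space[of Q borel "prob_algebra borel" x] unfolding stoch_kernel_def by simp
  then show "prob_space (Q x)" "sets (Q x) = sets borel" "Q x \<in> space (prob_algebra borel)"
    by (auto simp: space_prob_algebra)
qed

lemma c_comp:
  fixes c :: "'x::polish_space \<times> 'u1::polish_space \<times> 'u2::polish_space \<Rightarrow> real"
  assumes cont: "continuous_on (UNIV \<times> U1 \<times> U2) c" and U: "compact U1" "compact U2"
    and a: "a \<in> M \<rightarrow>\<^sub>M borel" and b1: "b1 \<in> M \<rightarrow>\<^sub>M borel" and b2: "b2 \<in> M \<rightarrow>\<^sub>M borel"
    and inU: "\<And>z. z \<in> space M \<Longrightarrow> b1 z \<in> U1 \<and> b2 z \<in> U2"
  shows "(\<lambda>z. c (a z, b1 z, b2 z)) \<in> borel_measurable M"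
proof -
  let ?S = "UNIV \<times> U1 \<times> U2"
  have "closed ?S" using U by (intro closed_Times closed_UNIV compact_imp_closed)
  then have Sb: "?S \<in> sets borel" by (rule borel_closed)
  have cm: "(\<lambda>z. indicator ?S z *\<^sub>R c z) \<in> borel_measurable borel"
    by (rule borel_measurable_continuous_on_indicator[OF Sb cont])
  have mm: "(\<lambda>z. (a z, b1 z, b2 z)) \<in> M \<rightarrow>\<^sub>M borel" using a b1 b2 by measurable
  have "(\<lambda>z. indicator ?S (a z, b1 z, b2 z) *\<^sub>R c (a z, b1 z, b2 z)) \<in> borel_measurable M"
    using measurable_compose[OF mm cm] by (simp add: comp_def)
  then show ?thesis
    by (rule measurable_cong[THEN iffD1, rotated]) (use inU in \<open>auto simp: indicator_def\<close>)
qed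

lemma c_unif:
  fixes c :: "'x::metric_space \<times> 'u::metric_space \<Rightarrow> real"
  assumes cont: "continuous_on (UNIV \<times> U) c" and U: "compact U" and e: "0 < e"
  shows "\<exists>d>0. \<forall>x' u. dist x' x < d \<longrightarrow> u \<in> U \<longrightarrow> \<bar>c (x', u) - c (x, u)\<bar> \<le> e"
proof -
  have ex: "\<forall>u\<in>U. \<exists>r>0. \<forall>z\<in>UNIV \<times> U. dist z (x, u) < r \<longrightarrow> dist (c z) (c (x, u)) < e / 2"
  proof
    fix u assume u: "u \<in> U"
    then have "(x, u) \<in> UNIV \<times> U" by simp
    then have "\<forall>\<epsilon>>0. \<exists>\<delta>>0. \<forall>z\<in>UNIV \<times> U. dist z (x, u) < \<delta> \<longrightarrow> dist (c z) (c (x, u)) < \<epsilon>"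
      using cont unfolding continuous_on_iff by blast
    from this[rule_format, of "e/2"] e
    show "\<exists>r>0. \<forall>z\<in>UNIV \<times> U. dist z (x, u) < r \<longrightarrow> dist (c z) (c (x, u)) < e / 2" by simp
  qed
  then obtain r where r: "\<And>u. u \<in> U \<Longrightarrow> 0 < r u"
    "\<And>u z. u \<in> U \<Longrightarrow> z \<in> UNIV \<times> U \<Longrightarrow> dist z (x, u) < r u \<Longrightarrow> \<bar>c z - c (x, u)\<bar> < e / 2"
    unfolding dist_real_def by metis
  have "U \<subseteq> (\<Union>u\<in>U. ball u (r u / 2))" using r(1) by auto
  then obtain T where T: "T \<subseteq> U" "finite T" "U \<subseteq> (\<Union>t\<in>T. ball t (r t / 2))"
    using compactE_image[OF U, of U "\<lambda>u. ball u (r u / 2)"] by blast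
  define \<delta> where "\<delta> = (if T = {} then 1 else Min ((\<lambda>t. r t / 2) ` T))"
  have \<delta>: "0 < \<delta>" unfolding \<delta>_def using T r(1) by (auto simp: Min_gr_iff)
  have \<delta>le: "\<delta> \<le> r t / 2" if "t \<in> T" for t
  proof -
    have "Min ((\<lambda>t. r t / 2) ` T) \<le> r t / 2" using that T(2) by (intro Min_le) auto
    then show ?thesis unfolding \<delta>_def using that by auto
  qed
  show ?thesis
  proof (intro exI[of _ \<delta>] conjI allI impI \<delta>)
    fix x' u assume x': "dist x' x < \<delta>" and u: "u \<in> U"
    obtain t where t: "t \<in> T" "dist t u < r t / 2" using T(3) u by auto
    have tU: "t \<in> U" using t(1) T(1) by auto
    have d1: "dist (x', u) (x, t) < r t"
    proof -
      have "dist (x', u) (x, t) \<le> \<bar>dist x' x\<bar> + \<bar>dist u t\<bar>"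
        unfolding dist_Pair_Pair by (rule sqrt_sum_squares_le_sum_abs)
      also have "\<dots> < r t / 2 + r t / 2" using x' \<delta>le[OF t(1)] t(2) by (simp add: dist_commute)
      finally show ?thesis by simp
    qed
    have d2: "dist (x, u) (x, t) < r t"
      using t(2) r(1)[OF tU] by (simp add: dist_Pair_Pair dist_commute)
    have "\<bar>c (x', u) - c (x, t)\<bar> < e / 2" using r(2)[OF tU _ d1] u by simp
    moreover have "\<bar>c (x, u) - c (x, t)\<bar> < e / 2" using r(2)[OF tU _ d2] u by simp
    ultimately show "\<bar>c (x', u) - c (x, u)\<bar> \<le> e" by linarith
  qed
qed

lemma tv_eps:
  fixes Q :: "'x::metric_space \<Rightarrow> 'y::topological_space measure"
  assumes "tv_continuous Q" "0 < e"
  shows "\<exists>d>0. \<forall>x'. x' \<noteq> x \<and> dist x' x < d \<longrightarrow> tv_dist (Q x') (Q x) < e"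
proof -
  have "((\<lambda>x'. tv_dist (Q x') (Q x)) \<longlongrightarrow> 0) (at x within UNIV)"
    unfolding tendsto_at_iff_sequentially
    using assms(1) unfolding tv_continuous_def comp_def by blast
  from tendstoD[OF this assms(2)] show ?thesis
    unfolding eventually_at dist_real_def by (force simp: abs_less_iff)
qed


lemma meas_sets:
  assumes "sets \<mu> = sets borel" "f \<in> borel_measurable borel"
  shows "f \<in> borel_measurable \<mu>"
  unfolding measurable_cong_sets[OF assms(1) refl] by (fact assms(2))

lemma policies_D:
  assumes "g \<in> policies U"
  shows "g \<in> borel_measurable borel" "g y \<in> U"
  using assms unfolding policies_def by auto

lemma I2_meas:
  fixes c :: "'x::polish_space \<times> 'u1::polish_space \<times> 'u2::polish_space \<Rightarrow> real"
    and g1 :: "'y1::polish_space \<Rightarrow> 'u1" and g2 :: "'y2::polish_space \<Rightarrow> 'u2"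
  assumes cont: "continuous_on (UNIV \<times> U1 \<times> U2) c" and U: "compact U1" "compact U2"
    and g1: "g1 \<in> policies U1" and g2: "g2 \<in> policies U2"
    and cB: "\<And>x u1 u2. u1 \<in> U1 \<Longrightarrow> u2 \<in> U2 \<Longrightarrow> \<bar>c (x, u1, u2)\<bar> \<le> B"
    and P: "P \<in> space (prob_algebra borel)"
  shows "(\<lambda>y1. \<integral>y2. c (z, g1 y1, g2 y2) \<partial>P) \<in> borel_measurable borel"
proof -
  have m: "(\<lambda>(y1, y2). c (z, g1 y1, g2 y2)) \<in> borel_measurable (borel \<Otimes>\<^sub>M borel)"
    unfolding case_prod_unfold
  proof (rule c_comp[OF cont U])
    show "(\<lambda>p. z) \<in> borel \<Otimes>\<^sub>M borel \<rightarrow>\<^sub>M borel" by simp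
    show "(\<lambda>p. g1 (fst p)) \<in> borel \<Otimes>\<^sub>M borel \<rightarrow>\<^sub>M borel"
      by (rule measurable_compose[OF measurable_fst policies_D(1)[OF g1]])
    show "(\<lambda>p. g2 (snd p)) \<in> borel \<Otimes>\<^sub>M borel \<rightarrow>\<^sub>M borel"
      by (rule measurable_compose[OF measurable_snd policies_D(1)[OF g2]])
    show "g1 (fst p) \<in> U1 \<and> g2 (snd p) \<in> U2" for p using policies_D(2)[OF g1] policies_D(2)[OF g2] by blast
  qed
  show ?thesis
    by (rule nested_measurable[where f="\<lambda>y1 y2. c (z, g1 y1, g2 y2)" and B=B, OF m])
       (use cB policies_D(2)[OF g1] policies_D(2)[OF g2] P in auto)
qed

lemma sec_meas:
  fixes c :: "'x::polish_space \<times> 'u1::polish_space \<times> 'u2::polish_space \<Rightarrow> real"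
    and g2 :: "'y2::polish_space \<Rightarrow> 'u2"
  assumes cont: "continuous_on (UNIV \<times> U1 \<times> U2) c" and U: "compact U1" "compact U2"
    and u1: "u1 \<in> U1" and g2: "g2 \<in> policies U2"
  shows "(\<lambda>y2. c (z, u1, g2 y2)) \<in> borel_measurable borel"
  by (rule c_comp[OF cont U]) (use u1 policies_D[OF g2] in auto)

theorem theorem3p4:
  fixes c :: "'x::polish_space \<times> 'u1::polish_space \<times> 'u2::polish_space \<Rightarrow> real"
    and U1 :: "'u1 set" and U2 :: "'u2 set"
    and Q1 :: "'x \<Rightarrow> 'y1::polish_space measure"
    and Q2 :: "'x \<Rightarrow> 'y2::polish_space measure"
    and \<zeta> :: "'x measure" and \<zeta>s :: "nat \<Rightarrow> 'x measure"
    and \<gamma>1 :: "'y1 \<Rightarrow> 'u1" and \<gamma>2 :: "'y2 \<Rightarrow> 'u2"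
    and \<gamma>1s :: "nat \<Rightarrow> 'y1 \<Rightarrow> 'u1" and \<gamma>2s :: "nat \<Rightarrow> 'y2 \<Rightarrow> 'u2"
  assumes A2_cont: "continuous_on (UNIV \<times> U1 \<times> U2) c"
    and A2_bdd: "bounded (c ` (UNIV \<times> U1 \<times> U2))"
    and A4: "compact U1" "compact U2"
    and A6_kernel: "stoch_kernel Q1" "stoch_kernel Q2"
    and A6_tv: "tv_continuous Q1" "tv_continuous Q2"
    and prior: "borel_prob \<zeta>" "\<And>m. borel_prob (\<zeta>s m)"
    and weak: "weak_conv_seq \<zeta>s \<zeta>"
    and saddle: "saddle_point c U1 U2 Q1 Q2 \<zeta> \<gamma>1 \<gamma>2"
    and saddle_m: "\<And>m. saddle_point c U1 U2 Q1 Q2 (\<zeta>s m) (\<gamma>1s m) (\<gamma>2s m)"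
  shows "(\<lambda>m. Jcost c Q1 Q2 (\<zeta>s m) (\<gamma>1s m) (\<gamma>2s m)) \<longlonglongrightarrow> Jcost c Q1 Q2 \<zeta> \<gamma>1 \<gamma>2"
proof -
  obtain Bc where Bc: "\<And>z. z \<in> UNIV \<times> U1 \<times> U2 \<Longrightarrow> \<bar>c z\<bar> \<le> Bc"
    using A2_bdd unfolding bounded_iff by auto
  define B where "B = \<bar>Bc\<bar> + 1"
  have B: "0 < B" unfolding B_def by simp
  have cB: "\<bar>c (x, u1, u2)\<bar> \<le> B" if "u1 \<in> U1" "u2 \<in> U2" for x u1 u2
    using Bc[of "(x, u1, u2)"] that unfolding B_def by simp
  have Qf: "prob_space (Q1 x)" "sets (Q1 x) = sets borel" "Q1 x \<in> space (prob_algebra borel)"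
    "prob_space (Q2 x)" "sets (Q2 x) = sets borel" "Q2 x \<in> space (prob_algebra borel)" for x
    using kernel_facts[OF A6_kernel(1)] kernel_facts[OF A6_kernel(2)] by auto
  define F where "F g1 g2 x = (\<integral>y1. (\<integral>y2. c (x, g1 y1, g2 y2) \<partial>Q2 x) \<partial>Q1 x)"
    for g1 :: "'y1 \<Rightarrow> 'u1" and g2 :: "'y2 \<Rightarrow> 'u2" and x
  have Jeq: "Jcost c Q1 Q2 \<mu> g1 g2 = integral\<^sup>L \<mu> (F g1 g2)" for \<mu> g1 g2
    unfolding Jcost_def F_def ..
  have I2b: "\<bar>\<integral>y2. c (z, g1 y1, g2 y2) \<partial>P\<bar> \<le> B"
    if hP: "prob_space P" and hg1: "g1 \<in> policies U1" and hg2: "g2 \<in> policies U2" for P z g1 g2 y1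
    by (rule int_abs_bound[OF hP]) (rule cB[OF policies_D(2)[OF hg1] policies_D(2)[OF hg2]])
  have Fb: "\<bar>F g1 g2 x\<bar> \<le> B" if "g1 \<in> policies U1" "g2 \<in> policies U2" for g1 g2 x
    unfolding F_def by (rule int_abs_bound[OF Qf(1)]) (rule I2b[OF Qf(4) that])
  have Fm: "F g1 g2 \<in> borel_measurable borel" if g1: "g1 \<in> policies U1" and g2: "g2 \<in> policies U2" for g1 g2
  proof -
    have m1: "(\<lambda>(p, y2). c (fst p, g1 (snd p), g2 y2)) \<in> borel_measurable ((borel \<Otimes>\<^sub>M borel) \<Otimes>\<^sub>M borel)"
      unfolding case_prod_unfold
    proof (rule c_comp[OF A2_cont A4])
      show "(\<lambda>p. fst (fst p)) \<in> (borel \<Otimes>\<^sub>M borel) \<Otimes>\<^sub>M borel \<rightarrow>\<^sub>M borel"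
        by (rule measurable_compose[OF measurable_fst measurable_fst])
      show "(\<lambda>p. g1 (snd (fst p))) \<in> (borel \<Otimes>\<^sub>M borel) \<Otimes>\<^sub>M borel \<rightarrow>\<^sub>M borel"
        by (rule measurable_compose[OF measurable_compose[OF measurable_fst measurable_snd] policies_D(1)[OF g1]])
      show "(\<lambda>p. g2 (snd p)) \<in> (borel \<Otimes>\<^sub>M borel) \<Otimes>\<^sub>M borel \<rightarrow>\<^sub>M borel"
        by (rule measurable_compose[OF measurable_snd policies_D(1)[OF g2]])
      show "g1 (snd (fst p)) \<in> U1 \<and> g2 (snd p) \<in> U2" if "p \<in> space ((borel \<Otimes>\<^sub>M borel) \<Otimes>\<^sub>M borel)" for p
        using policies_D(2)[OF g1] policies_D(2)[OF g2] by blast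
    qed
    have L2: "(\<lambda>p. Q2 (fst p)) \<in> (borel \<Otimes>\<^sub>M borel) \<rightarrow>\<^sub>M prob_algebra borel"
      using measurable_compose[OF measurable_fst A6_kernel(2)[unfolded stoch_kernel_def]] .
    have m2: "(\<lambda>p. \<integral>y2. c (fst p, g1 (snd p), g2 y2) \<partial>Q2 (fst p)) \<in> borel_measurable (borel \<Otimes>\<^sub>M borel)"
      by (rule nested_measurable[where f="\<lambda>p y2. c (fst p, g1 (snd p), g2 y2)" and B=B, OF m1 _ L2])
         (use cB policies_D(2)[OF g1] policies_D(2)[OF g2] in blast)
    have m2': "(\<lambda>(x, y1). \<integral>y2. c (x, g1 y1, g2 y2) \<partial>Q2 x) \<in> borel_measurable (borel \<Otimes>\<^sub>M borel)"
      unfolding case_prod_unfold by (fact m2)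
    have L1: "Q1 \<in> borel \<rightarrow>\<^sub>M prob_algebra borel" using A6_kernel(1) unfolding stoch_kernel_def .
    show ?thesis unfolding F_def
      by (rule nested_measurable[where f="\<lambda>x y1. \<integral>y2. c (x, g1 y1, g2 y2) \<partial>Q2 x" and B=B, OF m2' _ L1])
         (rule I2b[OF Qf(4) g1 g2])
  qed
  define I :: "(('y1 \<Rightarrow> 'u1) \<times> ('y2 \<Rightarrow> 'u2)) set" where "I = policies U1 \<times> policies U2"
  define Fs where "Fs p = F (fst p) (snd p)" for p
  have eqc: "\<exists>d>0. \<forall>x'. dist x' x < d \<longrightarrow> (\<forall>i\<in>I. \<bar>Fs i x' - Fs i x\<bar> \<le> e)" if e: "0 < e" for x e
  proof -
    define e3 where "e3 = e / 3"
    have e3: "0 < e3" unfolding e3_def using e by simp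
    obtain d1 where d1: "0 < d1" "\<And>x' u. dist x' x < d1 \<Longrightarrow> u \<in> U1 \<times> U2 \<Longrightarrow> \<bar>c (x', u) - c (x, u)\<bar> \<le> e3"
      using c_unif[OF A2_cont compact_Times[OF A4] e3, of x] by blast
    have e3B: "0 < e3 / B" using e3 B by simp
    obtain d2 where d2: "0 < d2" "\<And>x'. x' \<noteq> x \<Longrightarrow> dist x' x < d2 \<Longrightarrow> tv_dist (Q1 x') (Q1 x) < e3 / B"
      using tv_eps[OF A6_tv(1) e3B, of x] by blast
    obtain d3 where d3: "0 < d3" "\<And>x'. x' \<noteq> x \<Longrightarrow> dist x' x < d3 \<Longrightarrow> tv_dist (Q2 x') (Q2 x) < e3 / B"
      using tv_eps[OF A6_tv(2) e3B, of x] by blast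
    have tvB: "B * t \<le> e3" if "t < e3 / B" for t
      using that B by (simp add: field_simps)
    show ?thesis
    proof (intro exI[of _ "min d1 (min d2 d3)"] conjI allI impI ballI)
      show "0 < min d1 (min d2 d3)" using d1 d2 d3 by simp
      fix x' i assume dx: "dist x' x < min d1 (min d2 d3)" and i: "i \<in> I"
      obtain g1 g2 where i': "i = (g1, g2)" and g1: "g1 \<in> policies U1" and g2: "g2 \<in> policies U2"
        using i unfolding I_def by auto
      show "\<bar>Fs i x' - Fs i x\<bar> \<le> e"
      proof (cases "x' = x")
        case True then show ?thesis using e by simp
      next
        case False
        define I2 where "I2 z P y1 = (\<integral>y2. c (z, g1 y1, g2 y2) \<partial>P)" for z P y1
        have I2m: "I2 z (Q2 w) \<in> borel_measurable (Q1 v)" for z w v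
          unfolding I2_def
          by (rule meas_sets[OF Qf(2) I2_meas[OF A2_cont A4 g1 g2 cB Qf(6)]])
        have I2bd: "\<bar>I2 z (Q2 w) y1\<bar> \<le> B" for z w y1 unfolding I2_def by (rule I2b[OF Qf(4) g1 g2])
        have Fx: "Fs i x' = integral\<^sup>L (Q1 x') (I2 x' (Q2 x'))" "Fs i x = integral\<^sup>L (Q1 x) (I2 x (Q2 x))"
          unfolding Fs_def i' F_def I2_def by simp_all
        have s1: "\<bar>integral\<^sup>L (Q1 x') (I2 x' (Q2 x')) - integral\<^sup>L (Q1 x') (I2 x (Q2 x'))\<bar> \<le> e3"
        proof (rule diff_bound[OF Qf(1) I2m I2m I2bd I2bd])
          fix y1
          show "\<bar>I2 x' (Q2 x') y1 - I2 x (Q2 x') y1\<bar> \<le> e3"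
            unfolding I2_def
          proof (rule diff_bound[OF Qf(4)])
            show "(\<lambda>y2. c (x', g1 y1, g2 y2)) \<in> borel_measurable (Q2 x')"
              by (rule meas_sets[OF Qf(5) sec_meas[OF A2_cont A4 policies_D(2)[OF g1] g2]])
            show "(\<lambda>y2. c (x, g1 y1, g2 y2)) \<in> borel_measurable (Q2 x')"
              by (rule meas_sets[OF Qf(5) sec_meas[OF A2_cont A4 policies_D(2)[OF g1] g2]])
            show "\<bar>c (x', g1 y1, g2 y2)\<bar> \<le> B" for y2 using cB policies_D(2)[OF g1] policies_D(2)[OF g2] by blast
            show "\<bar>c (x, g1 y1, g2 y2)\<bar> \<le> B" for y2 using cB policies_D(2)[OF g1] policies_D(2)[OF g2] by blast
            show "\<bar>c (x', g1 y1, g2 y2) - c (x, g1 y1, g2 y2)\<bar> \<le> e3" for y2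
              using d1(2)[of x' "(g1 y1, g2 y2)"] dx policies_D(2)[OF g1] policies_D(2)[OF g2] by auto
          qed
        qed
        have s2: "\<bar>integral\<^sup>L (Q1 x') (I2 x (Q2 x')) - integral\<^sup>L (Q1 x') (I2 x (Q2 x))\<bar> \<le> e3"
        proof (rule diff_bound[OF Qf(1) I2m I2m I2bd I2bd])
          fix y1
          have "\<bar>I2 x (Q2 x') y1 - I2 x (Q2 x) y1\<bar> \<le> B * tv_dist (Q2 x') (Q2 x)"
            unfolding I2_def
            by (rule tv_bound[OF Qf(4,5) Qf(4,5) sec_meas[OF A2_cont A4 policies_D(2)[OF g1] g2]])
               (use cB policies_D(2)[OF g1] policies_D(2)[OF g2] in blast)
          also have "\<dots> \<le> e3" using tvB d3(2)[OF False] dx by simp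
          finally show "\<bar>I2 x (Q2 x') y1 - I2 x (Q2 x) y1\<bar> \<le> e3" .
        qed
        have s3: "\<bar>integral\<^sup>L (Q1 x') (I2 x (Q2 x)) - integral\<^sup>L (Q1 x) (I2 x (Q2 x))\<bar> \<le> e3"
        proof -
          have "\<bar>integral\<^sup>L (Q1 x') (I2 x (Q2 x)) - integral\<^sup>L (Q1 x) (I2 x (Q2 x))\<bar> \<le> B * tv_dist (Q1 x') (Q1 x)"
            unfolding I2_def
            by (rule tv_bound[OF Qf(1,2) Qf(1,2) I2_meas[OF A2_cont A4 g1 g2 cB Qf(6)]])
               (auto intro: I2b[OF Qf(4) g1 g2])
          also have "\<dots> \<le> e3" using tvB d2(2)[OF False] dx by simp
          finally show ?thesis .
        qed
        show ?thesis unfolding Fx using s1 s2 s3 unfolding e3_def by linarith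
      qed
    qed
  qed
  have unif: "\<exists>N. \<forall>m\<ge>N. \<forall>g1\<in>policies U1. \<forall>g2\<in>policies U2.
      \<bar>Jcost c Q1 Q2 (\<zeta>s m) g1 g2 - Jcost c Q1 Q2 \<zeta> g1 g2\<bar> \<le> e" if e: "0 < e" for e
  proof -
    have "\<exists>N. \<forall>m\<ge>N. \<forall>i\<in>I. \<bar>integral\<^sup>L (\<zeta>s m) (Fs i) - integral\<^sup>L \<zeta> (Fs i)\<bar> \<le> e"
    proof (rule unif_conv[OF prior weak _ _ B eqc e])
      show "Fs i \<in> borel_measurable borel" if "i \<in> I" for i
        using that Fm unfolding I_def Fs_def by auto
      show "\<bar>Fs i x\<bar> \<le> B" if "i \<in> I" for i x
        using that Fb unfolding I_def Fs_def by auto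
    qed
    then show ?thesis unfolding I_def Fs_def Jeq by auto
  qed
  have Jb: "\<bar>Jcost c Q1 Q2 \<mu> g1 g2\<bar> \<le> B"
    if "borel_prob \<mu>" "g1 \<in> policies U1" "g2 \<in> policies U2" for \<mu> g1 g2
    unfolding Jeq by (rule int_abs_bound[OF bp_facts(1)[OF that(1)]]) (rule Fb[OF that(2,3)])
  have bb1: "bdd_below ((\<lambda>g1. Jcost c Q1 Q2 \<mu> g1 g2) ` policies U1)"
    if "borel_prob \<mu>" "g2 \<in> policies U2" for \<mu> g2
  proof (rule bdd_belowI2[where m="-B"])
    fix g1 :: "'y1 \<Rightarrow> 'u1" assume "g1 \<in> policies U1"
    from Jb[OF that(1) this that(2)] show "- B \<le> Jcost c Q1 Q2 \<mu> g1 g2" by linarith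
  qed
  have bb2: "bdd_above ((\<lambda>g2. Jcost c Q1 Q2 \<mu> g1 g2) ` policies U2)"
    if "borel_prob \<mu>" "g1 \<in> policies U1" for \<mu> g1
  proof (rule bdd_aboveI2[where M=B])
    fix g2 :: "'y2 \<Rightarrow> 'u2" assume "g2 \<in> policies U2"
    from Jb[OF that(1) that(2) this] show "Jcost c Q1 Q2 \<mu> g1 g2 \<le> B" by linarith
  qed
  have sp: "\<gamma>1 \<in> policies U1" "\<gamma>2 \<in> policies U2"
    "(INF g1\<in>policies U1. Jcost c Q1 Q2 \<zeta> g1 \<gamma>2) = Jcost c Q1 Q2 \<zeta> \<gamma>1 \<gamma>2"
    "Jcost c Q1 Q2 \<zeta> \<gamma>1 \<gamma>2 = (SUP g2\<in>policies U2. Jcost c Q1 Q2 \<zeta> \<gamma>1 g2)"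
    using saddle unfolding saddle_point_def by auto
  have spm: "\<gamma>1s m \<in> policies U1" "\<gamma>2s m \<in> policies U2"
    "(INF g1\<in>policies U1. Jcost c Q1 Q2 (\<zeta>s m) g1 (\<gamma>2s m)) = Jcost c Q1 Q2 (\<zeta>s m) (\<gamma>1s m) (\<gamma>2s m)"
    "Jcost c Q1 Q2 (\<zeta>s m) (\<gamma>1s m) (\<gamma>2s m) = (SUP g2\<in>policies U2. Jcost c Q1 Q2 (\<zeta>s m) (\<gamma>1s m) g2)" for m
    using saddle_m[of m] unfolding saddle_point_def by auto
  show ?thesis
  proof (rule LIMSEQ_I)
    fix r :: real assume r: "0 < r"
    then have r2: "0 < r / 2" by simp
    obtain N where N: "\<And>m g1 g2. m \<ge> N \<Longrightarrow> g1 \<in> policies U1 \<Longrightarrow> g2 \<in> policies U2 \<Longrightarrow>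
        \<bar>Jcost c Q1 Q2 (\<zeta>s m) g1 g2 - Jcost c Q1 Q2 \<zeta> g1 g2\<bar> \<le> r / 2"
      using unif[OF r2] by blast
    show "\<exists>N. \<forall>m\<ge>N. norm (Jcost c Q1 Q2 (\<zeta>s m) (\<gamma>1s m) (\<gamma>2s m) - Jcost c Q1 Q2 \<zeta> \<gamma>1 \<gamma>2) < r"
    proof (intro exI allI impI)
      fix m assume m: "N \<le> m"
      let ?Jm = "Jcost c Q1 Q2 (\<zeta>s m)" and ?J = "Jcost c Q1 Q2 \<zeta>"
      have up: "?Jm (\<gamma>1s m) (\<gamma>2s m) \<le> ?J \<gamma>1 \<gamma>2 + r / 2"
      proof -
        have "?Jm (\<gamma>1s m) (\<gamma>2s m) = (INF g1\<in>policies U1. ?Jm g1 (\<gamma>2s m))" using spm(3) by simp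
        also have "\<dots> \<le> ?Jm \<gamma>1 (\<gamma>2s m)" by (rule cINF_lower[OF bb1[OF prior(2) spm(2)[of m]] sp(1)])
        also have "\<dots> \<le> ?J \<gamma>1 (\<gamma>2s m) + r / 2" using N[OF m sp(1) spm(2)[of m]] by linarith
        also have "?J \<gamma>1 (\<gamma>2s m) \<le> (SUP g2\<in>policies U2. ?J \<gamma>1 g2)"
          by (rule cSUP_upper[OF spm(2)[of m] bb2[OF prior(1) sp(1)]])
        also have "(SUP g2\<in>policies U2. ?J \<gamma>1 g2) = ?J \<gamma>1 \<gamma>2" using sp(4) by simp
        finally show ?thesis by simp
      qed
      have lo: "?J \<gamma>1 \<gamma>2 - r / 2 \<le> ?Jm (\<gamma>1s m) (\<gamma>2s m)"
      proof -
        have "?J \<gamma>1 \<gamma>2 = (INF g1\<in>policies U1. ?J g1 \<gamma>2)" using sp(3) by simp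
        also have "\<dots> \<le> ?J (\<gamma>1s m) \<gamma>2" by (rule cINF_lower[OF bb1[OF prior(1) sp(2)] spm(1)[of m]])
        also have "\<dots> \<le> ?Jm (\<gamma>1s m) \<gamma>2 + r / 2" using N[OF m spm(1)[of m] sp(2)] by linarith
        also have "?Jm (\<gamma>1s m) \<gamma>2 \<le> (SUP g2\<in>policies U2. ?Jm (\<gamma>1s m) g2)"
          by (rule cSUP_upper[OF sp(2) bb2[OF prior(2) spm(1)[of m]]])
        also have "(SUP g2\<in>policies U2. ?Jm (\<gamma>1s m) g2) = ?Jm (\<gamma>1s m) (\<gamma>2s m)" using spm(4) by simp
        finally show ?thesis by simp
      qed
      show "norm (?Jm (\<gamma>1s m) (\<gamma>2s m) - ?J \<gamma>1 \<gamma>2) < r" using up lo r by simp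
    qed
  qed
qed


end
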